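(* For every positive integer $s$, the number $r(s)$ of $(s,s+1,s+2)$-core partitions (equivalently, the number of order ideals of $T_s$) satisfies $r(s)=r(s-1)+\sum_{i=2}^{s}r(i-2)\,r(s-i)$ for $s\ge 2$ (with $r(0)=1$), and $$r(s)=M_s=\sum_{k\ge 0}\binom{s}{2k}C_k,$$ where $C_k=\frac{1}{k+1}\binom{2k}{k}$ is the $k$th Catalan number, i.e. $r(s)$ is the $s$th Motzkin number.
   Context: A partition is a $t$-core if none of the hook lengths of its boxes is divisible by $t$; an $(s,s+1,s+2)$-core is a partition that is simultaneously an $s$-core, an $(s+1)$-core and an $(s+2)$-core. $T_s$ denotes the set of positive integers not of the form $k_1s+k_2(s+1)+k_3(s+2)$ with $k_i\in\mathbb{N}$, ordered by $y\ge x$ iff there is a chain $y=y_0,\ldots,y_l=x$ in $T_s$ with consecutive differences in $\{s,s+1,s+2\}$; we set $T_0=\emptyset$, so $r(0)=1$ (the empty partition). *)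

theory Defs
  imports Main
begin

definition is_partition :: "nat list \<Rightarrow> bool" where
  "is_partition lam \<longleftrightarrow> sorted_wrt (\<ge>) lam \<and> (\<forall>x\<in>set lam. 0 < x)"

text \<open>Conjugate part: number of parts exceeding j (column length of column j, 0-indexed).\<close>
definition conj_part :: "nat list \<Rightarrow> nat \<Rightarrow> nat" where
  "conj_part lam j = length (filter (\<lambda>x. j < x) lam)"

definition boxes :: "nat list \<Rightarrow> (nat \<times> nat) set" where
  "boxes lam = {(i, j). i < length lam \<and> j < lam ! i}"

text \<open>Hook length of box (i,j): arm + leg + 1.\<close>
definition hook :: "nat list \<Rightarrow> nat \<Rightarrow> nat \<Rightarrow> nat" where
  "hook lam i j = (lam ! i - j - 1) + (conj_part lam j - i - 1) + 1"

definition is_core :: "nat \<Rightarrow> nat list \<Rightarrow> bool" where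
  "is_core t lam \<longleftrightarrow> (\<forall>(i, j)\<in>boxes lam. \<not> t dvd hook lam i j)"

definition cores3 :: "nat \<Rightarrow> nat list set" where
  "cores3 s = {lam. is_partition lam \<and> is_core s lam \<and> is_core (s + 1) lam \<and> is_core (s + 2) lam}"

definition r :: "nat \<Rightarrow> nat" where
  "r s = (if s = 0 then 1 else card (cores3 s))"

definition T :: "nat \<Rightarrow> nat set" where
  "T s = {n. 0 < n \<and> \<not> (\<exists>k1 k2 k3. n = k1 * s + k2 * (s + 1) + k3 * (s + 2))}"

definition T_step :: "nat \<Rightarrow> nat \<Rightarrow> nat \<Rightarrow> bool" where
  "T_step s y x \<longleftrightarrow> y \<in> T s \<and> x \<in> T s \<and> x < y \<and> y - x \<in> {s, s + 1, s + 2}"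

text \<open>y \<ge> x in T_s (chains of length l \<ge> 0).\<close>
definition T_ge :: "nat \<Rightarrow> nat \<Rightarrow> nat \<Rightarrow> bool" where
  "T_ge s y x \<longleftrightarrow> y \<in> T s \<and> x \<in> T s \<and> (T_step s)\<^sup>*\<^sup>* y x"

definition order_ideals :: "nat \<Rightarrow> nat set set" where
  "order_ideals s = {I. I \<subseteq> T s \<and> (\<forall>y\<in>I. \<forall>x. T_ge s y x \<longrightarrow> x \<in> I)}"

definition catalan :: "nat \<Rightarrow> nat" where
  "catalan k = ((2 * k) choose k) div (k + 1)"

end

theory Submission
  imports Defs "HOL-Computational_Algebra.Formal_Power_Series"
begin


declare binomial_Suc_Suc[simp del]

lemma binom_rel: "Suc k * ((2*k) choose Suc k) = k * ((2*k) choose k)"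
  by (metis add_diff_cancel_right' binomial_absorb_comp binomial_absorption mult_2)

lemma cat_mult: "catalan k * Suc k = (2*k) choose k"
proof -
  have "(2*k) choose k = Suc k * (((2*k) choose k) - ((2*k) choose Suc k))"
    using binom_rel[of k] by (simp add: algebra_simps diff_mult_distrib2)
  then have "((2*k) choose k) div Suc k = ((2*k) choose k) - ((2*k) choose Suc k)"
    by (metis div_mult_self1_is_m zero_less_Suc)
  then show ?thesis unfolding catalan_def
    using \<open>(2*k) choose k = _\<close> by (simp add: mult.commute)
qed

lemma cat_step: "real (catalan (Suc n)) * (n+2) = 2 * (2*n+1) * real (catalan n)"
proof -
  have a: "Suc n * ((2*n+2) choose Suc n) = (2*n+2) * ((2*n+1) choose n)"
    using Suc_times_binomial[of n "2*n+1"] by simp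
  have b: "(2*n+1) * ((2*n) choose n) = ((2*n+1) choose Suc n) * Suc n"
    using Suc_times_binomial_eq[of "2*n" n] by simp
  have c: "((2*n+1) choose Suc n) = ((2*n+1) choose n)"
    using binomial_symmetric[of n "2*n+1"] by simp
  have d: "catalan (Suc n) * (n+2) = (2*n+2) choose Suc n"
    using cat_mult[of "Suc n"] by simp
  have e: "catalan n * Suc n = (2*n) choose n" using cat_mult by simp
  have "catalan (Suc n) * (n+2) * (n+1) * (n+1) = (2*n+2) * ((2*n+1) * (catalan n * (n+1)))"
  proof -
    have "catalan (Suc n) * (n+2) * (n+1) * (n+1) = (Suc n * ((2*n+2) choose Suc n)) * (n+1)"
      using d by simp
    also have "\<dots> = (2*n+2) * (((2*n+1) choose Suc n) * Suc n)" using a c by simp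
    also have "\<dots> = (2*n+2) * ((2*n+1) * (catalan n * (n+1)))" using b e by simp
    finally show ?thesis .
  qed
  then have "(catalan (Suc n) * (n+2)) * ((n+1)*(n+1)) = (2*(2*n+1)*catalan n) * ((n+1)*(n+1))"
    by (simp add: algebra_simps)
  then have "catalan (Suc n) * (n+2) = 2 * (2*n+1) * catalan n"
    by (subst (asm) mult_right_cancel) auto
  then have "real (catalan (Suc n) * (n+2)) = real (2 * (2*n+1) * catalan n)" by simp
  then show ?thesis by (simp add: algebra_simps)
qed

definition bb :: "nat \<Rightarrow> real" where "bb k = ((1/2::real) gchoose k) * (-4)^k"

lemma bb_Suc: "bb (Suc n) = -2 * real (catalan n)"
proof (induction n)
  case 0
  then show ?case by (simp add: bb_def catalan_def)
next
  case (Suc n)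
  have g: "(1/2::real) * ((1/2) gchoose Suc n) = real (Suc n) * ((1/2) gchoose Suc n) + real (Suc (Suc n)) * ((1/2) gchoose Suc (Suc n))"
    by (rule gbinomial_mult_1)
  then have g2: "real (Suc (Suc n)) * ((1/2) gchoose Suc (Suc n)) = (1/2 - real (Suc n)) * ((1/2) gchoose Suc n)"
    by (simp add: algebra_simps)
  have "bb (Suc (Suc n)) * (real n + 2) = (-4) * ((-4)^Suc n * (real (Suc (Suc n)) * ((1/2) gchoose Suc (Suc n))))"
    by (simp add: bb_def algebra_simps)
  also have "\<dots> = (-4) * ((-4)^Suc n * ((1/2 - real (Suc n)) * ((1/2) gchoose Suc n)))"
    by (simp only: g2)
  also have "\<dots> = (2 * (2 * real n + 1)) * bb (Suc n)"
    by (simp add: bb_def algebra_simps)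
  also have "\<dots> = -2 * (real (catalan (Suc n)) * (real n + 2))"
    using Suc cat_step[of n] by (simp add: algebra_simps)
  finally show ?case
    by (metis (no_types, lifting) mult.assoc mult_right_cancel add_nonneg_pos of_nat_0_le_iff zero_less_numeral order_less_irrefl)
qed

lemma bb0: "bb 0 = 1" by (simp add: bb_def)

lemma cat_rec: "catalan (Suc m) = (\<Sum>j\<le>m. catalan j * catalan (m - j))"
proof -
  define n where "n = Suc (Suc m)"
  have V: "(\<Sum>k=0..n. ((1/2::real) gchoose k) * ((1/2) gchoose (n - k))) = 1 gchoose n"
    using gbinomial_Vandermonde[of "1/2::real" "1/2" n] by simp
  have z: "(1::real) gchoose n = 0"
    proof -
    have "(1::nat) choose n = 0" by (rule binomial_eq_0) (simp add: n_def)
    moreover have e: "of_nat ((1::nat) choose n) = ((1::real) gchoose n)"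
      using binomial_gbinomial[of 1 n, where 'a=real] by (simp only: of_nat_1)
    ultimately have "0 = ((1::real) gchoose n)" by (simp only: of_nat_0)
    then show ?thesis by (rule sym)
  qed
  have "(\<Sum>k=0..n. bb k * bb (n - k)) = (-4)^n * (\<Sum>k=0..n. ((1/2::real) gchoose k) * ((1/2) gchoose (n - k)))"
    unfolding sum_distrib_left
  proof (rule sum.cong)
    fix k assume "k \<in> {0..n}"
    then have "k + (n - k) = n" by simp
    then have p: "(-4::real)^k * (-4)^(n-k) = (-4)^n" by (metis power_add)
    have "bb k * bb (n - k) = ((-4::real)^k * (-4)^(n-k)) * (((1/2::real) gchoose k) * ((1/2) gchoose (n - k)))"
      unfolding bb_def by (simp only: mult_ac)
    then show "bb k * bb (n - k) = (-4)^n * (((1/2::real) gchoose k) * ((1/2) gchoose (n - k)))"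
      by (simp only: p)
  qed simp
  then have S0: "(\<Sum>k=0..n. bb k * bb (n - k)) = 0" using V z by simp
  have "(\<Sum>k=0..n. bb k * bb (n - k)) = bb 0 * bb n + ((\<Sum>j=0..m. bb (Suc j) * bb (n - Suc j)) + bb n * bb 0)"
  proof -
    have "(\<Sum>k=0..n. bb k * bb (n - k)) = bb 0 * bb (n - 0) + (\<Sum>j=0..Suc m. bb (Suc j) * bb (n - Suc j))"
      using sum.atLeast0_atMost_Suc_shift[of "\<lambda>k. bb k * bb (n - k)" "Suc m"] by (simp only: n_def o_def)
    also have "(\<Sum>j=0..Suc m. bb (Suc j) * bb (n - Suc j)) = (\<Sum>j=0..m. bb (Suc j) * bb (n - Suc j)) + bb (Suc (Suc m)) * bb (n - Suc (Suc m))"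
      using sum.atLeast0_atMost_Suc[of "\<lambda>j. bb (Suc j) * bb (n - Suc j)" m] by (simp only:)
    finally show ?thesis unfolding n_def by simp
  qed
  also have "(\<Sum>j=0..m. bb (Suc j) * bb (n - Suc j)) = (\<Sum>j=0..m. 4 * (real (catalan j) * real (catalan (m - j))))"
  proof (rule sum.cong)
    fix j assume "j \<in> {0..m}"
    then have "n - Suc j = Suc (m - j)" unfolding n_def by auto
    then show "bb (Suc j) * bb (n - Suc j) = 4 * (real (catalan j) * real (catalan (m - j)))"
      by (simp add: bb_Suc)
  qed simp
  finally have "0 = -4 * real (catalan (Suc m)) + 4 * (\<Sum>j=0..m. real (catalan j) * real (catalan (m - j)))"
    using S0 unfolding n_def by (simp add: bb_Suc bb0 sum_distrib_left)
  then have "real (catalan (Suc m)) = (\<Sum>j=0..m. real (catalan j * catalan (m - j)))" by simp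
  also have "\<dots> = real (\<Sum>j\<le>m. catalan j * catalan (m - j))"
    by (simp add: atLeast0AtMost)
  finally show ?thesis by (simp only: of_nat_eq_iff)
qed

lemma vdm: "(\<Sum>a\<le>n. (a choose p) * ((n - a) choose q)) = Suc n choose (p + q + 1)"
proof (induction n arbitrary: q)
  case 0
  then show ?case by (cases p; cases q) (simp_all add: binomial_Suc_Suc)
next
  case (Suc n)
  show ?case
  proof (cases q)
    case 0
    then show ?thesis using sum_choose_upper[of p "Suc n"] by simp
  next
    case (Suc q')
    have "(\<Sum>a\<le>Suc n. (a choose p) * ((Suc n - a) choose q))
        = (\<Sum>a\<le>n. (a choose p) * ((Suc n - a) choose q)) + (Suc n choose p) * (0 choose q)"
      by simp
    also have "\<dots> = (\<Sum>a\<le>n. (a choose p) * ((Suc n - a) choose q))" using Suc by simp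
    also have "\<dots> = (\<Sum>a\<le>n. (a choose p) * ((n - a) choose q') + (a choose p) * ((n - a) choose q))"
    proof (rule sum.cong)
      fix a assume "a \<in> {..n}"
      then have "Suc n - a = Suc (n - a)" by auto
      then show "(a choose p) * ((Suc n - a) choose q) = (a choose p) * ((n - a) choose q') + (a choose p) * ((n - a) choose q)"
        using Suc by (simp add: binomial_Suc_Suc algebra_simps)
    qed simp
    also have "\<dots> = (Suc n choose (p + q' + 1)) + (Suc n choose (p + q + 1))"
      by (simp add: sum.distrib Suc.IH)
    also have "\<dots> = Suc (Suc n) choose (p + q + 1)"
      using Suc by (simp add: binomial_Suc_Suc)
    finally show ?thesis .
  qed
qed

definition mot :: "nat \<Rightarrow> nat" where
  "mot s = (\<Sum>k\<le>s. (s choose (2*k)) * catalan k)"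

lemma mot_bound: "s \<le> B \<Longrightarrow> mot s = (\<Sum>k\<le>B. (s choose (2*k)) * catalan k)"
  unfolding mot_def
  by (rule sum.mono_neutral_left) auto

lemma mot_step1: "mot (Suc (Suc n)) = mot (Suc n) + (\<Sum>m\<le>n. (Suc n choose (2*m+1)) * catalan (Suc m))"
proof -
  have "mot (Suc (Suc n)) = (\<Sum>k\<le>Suc (Suc n). (Suc (Suc n) choose (2*k)) * catalan k)"
    by (simp add: mot_def)
  also have "\<dots> = 1 + (\<Sum>m\<le>Suc n. (Suc (Suc n) choose (2*m+2)) * catalan (Suc m))"
    by (subst sum.atMost_Suc_shift) (simp add: catalan_def)
  also have "\<dots> = 1 + (\<Sum>m\<le>Suc n. (Suc n choose (2*m+2)) * catalan (Suc m))
       + (\<Sum>m\<le>Suc n. (Suc n choose (2*m+1)) * catalan (Suc m))"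
    by (simp add: binomial_Suc_Suc sum.distrib algebra_simps)
  also have "(\<Sum>m\<le>Suc n. (Suc n choose (2*m+1)) * catalan (Suc m)) = (\<Sum>m\<le>n. (Suc n choose (2*m+1)) * catalan (Suc m))"
    by simp
  also have "1 + (\<Sum>m\<le>Suc n. (Suc n choose (2*m+2)) * catalan (Suc m)) = mot (Suc n)"
  proof -
    have "mot (Suc n) = (\<Sum>k\<le>Suc (Suc n). (Suc n choose (2*k)) * catalan k)"
      by (rule mot_bound) simp
    also have "\<dots> = 1 + (\<Sum>m\<le>Suc n. (Suc n choose (2*m+2)) * catalan (Suc m))"
      by (subst sum.atMost_Suc_shift) (simp add: catalan_def)
    finally show ?thesis by simp
  qed
  finally show ?thesis .
qed

lemma mot_step2: "(\<Sum>a\<le>n. mot a * mot (n - a)) = (\<Sum>m\<le>n. (Suc n choose (2*m+1)) * catalan (Suc m))"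
proof -
  define F where "F k l = catalan k * catalan l * (Suc n choose (2*(k+l)+1))" for k l
  have "(\<Sum>a\<le>n. mot a * mot (n - a)) = (\<Sum>a\<le>n. (\<Sum>k\<le>n. (a choose (2*k)) * catalan k) * (\<Sum>l\<le>n. ((n-a) choose (2*l)) * catalan l))"
    by (rule sum.cong) (auto simp: mot_bound)
  also have "\<dots> = (\<Sum>a\<le>n. \<Sum>k\<le>n. \<Sum>l\<le>n. catalan k * catalan l * ((a choose (2*k)) * ((n-a) choose (2*l))))"
    by (rule sum.cong[OF refl]) (simp add: sum_product mult_ac)
  also have "\<dots> = (\<Sum>k\<le>n. \<Sum>a\<le>n. \<Sum>l\<le>n. catalan k * catalan l * ((a choose (2*k)) * ((n-a) choose (2*l))))"
    by (rule sum.swap)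
  also have "\<dots> = (\<Sum>k\<le>n. \<Sum>l\<le>n. \<Sum>a\<le>n. catalan k * catalan l * ((a choose (2*k)) * ((n-a) choose (2*l))))"
    by (rule sum.cong[OF refl], rule sum.swap)
  also have "\<dots> = (\<Sum>k\<le>n. \<Sum>l\<le>n. F k l)"
    by (simp add: F_def vdm sum_distrib_left[symmetric] algebra_simps del: sum.swap)
  also have "\<dots> = (\<Sum>(k,l)\<in>{..n}\<times>{..n}. F k l)"
    by (simp add: sum.cartesian_product)
  also have "\<dots> = (\<Sum>(k,l)\<in>{(k,l). k+l \<le> n}. F k l)"
  proof (rule sum.mono_neutral_right)
    show "finite ({..n}\<times>{..n})" by simp
    show "{(k,l). k+l \<le> n} \<subseteq> {..n}\<times>{..n}" by auto
    show "\<forall>i\<in>{..n} \<times> {..n} - {(k, l). k + l \<le> n}. (case i of (k, l) \<Rightarrow> F k l) = 0"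
      by (auto simp: F_def binomial_eq_0)
  qed
  also have "\<dots> = (\<Sum>m\<le>n. \<Sum>j\<le>m. F j (m - j))"
    by (rule sum.triangle_reindex_eq)
  also have "\<dots> = (\<Sum>m\<le>n. (Suc n choose (2*m+1)) * catalan (Suc m))"
  proof (rule sum.cong)
    fix m assume "m \<in> {..n}"
    have "(\<Sum>j\<le>m. F j (m - j)) = (\<Sum>j\<le>m. (Suc n choose (2*m+1)) * (catalan j * catalan (m - j)))"
      by (rule sum.cong) (auto simp: F_def algebra_simps)
    also have "\<dots> = (Suc n choose (2*m+1)) * catalan (Suc m)"
      by (simp add: sum_distrib_left[symmetric] cat_rec)
    finally show "(\<Sum>j\<le>m. F j (m - j)) = (Suc n choose (2*m+1)) * catalan (Suc m)" .
  qed simp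
  finally show ?thesis .
qed

lemma mot_rec: "mot (Suc (Suc n)) = mot (Suc n) + (\<Sum>a\<le>n. mot a * mot (n - a))"
  using mot_step1 mot_step2 by simp



definition P :: "nat \<Rightarrow> (nat \<times> nat) set" where
  "P n = {(m,k). 2*m \<le> k \<and> k+2 \<le> n}"
definition dcl :: "(nat \<times> nat) set \<Rightarrow> bool" where
  "dcl S \<longleftrightarrow> (\<forall>m k. (Suc m, k) \<in> S \<longrightarrow> (m,k) \<in> S \<and> (m, k-1) \<in> S \<and> (m, k-2) \<in> S)"
definition ID :: "nat \<Rightarrow> (nat \<times> nat) set set" where
  "ID n = {S. S \<subseteq> P n \<and> dcl S}"

lemma finite_P: "finite (P n)"
proof -
  have "P n \<subseteq> {..n} \<times> {..n}" unfolding P_def by auto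
  then show ?thesis by (rule finite_subset) simp
qed

lemma finite_ID: "finite (ID n)"
proof -
  have "ID n \<subseteq> Pow (P n)" unfolding ID_def by auto
  then show ?thesis by (rule finite_subset) (simp add: finite_P)
qed

lemma cone: "dcl S \<Longrightarrow> (m,k) \<in> S \<Longrightarrow> k \<le> p + 2*m \<Longrightarrow> p \<le> k \<Longrightarrow> (0,p) \<in> S"
proof (induction m arbitrary: k)
  case 0
  then show ?case by auto
next
  case (Suc m)
  have d: "(m,k) \<in> S" "(m,k-1) \<in> S" "(m,k-2) \<in> S" using Suc.prems unfolding dcl_def by auto
  define k' where "k' = max p (k-2)"
  have "k' = k \<or> k' = k - 1 \<or> k' = k - 2" using Suc.prems unfolding k'_def by auto
  then have "(m,k') \<in> S" using d by auto
  moreover have "k' \<le> p + 2*m" "p \<le> k'" using Suc.prems unfolding k'_def by auto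
  ultimately show ?case using Suc.IH Suc.prems(1) by blast
qed

lemma diag: "dcl S \<Longrightarrow> (m,k) \<in> S \<Longrightarrow> k \<le> 2*m \<Longrightarrow> (0,0) \<in> S"
  using cone[of S m k 0] by auto

definition Bp :: "nat \<Rightarrow> nat \<Rightarrow> (nat \<times> nat) set set" where
  "Bp n p = {S \<in> ID n. (\<forall>k<p. (0,k) \<in> S) \<and> (0,p) \<notin> S}"

lemma ID_Un: assumes "n \<ge> 1" shows "ID n = (\<Union>p<n. Bp n p)"
proof
  show "ID n \<subseteq> (\<Union>p<n. Bp n p)"
  proof
    fix S assume S: "S \<in> ID n"
    have "(0, n-1) \<notin> S" using S assms unfolding ID_def P_def by auto
    define p where "p = (LEAST k. (0,k) \<notin> S)"
    have p1: "(0,p) \<notin> S" unfolding p_def by (rule LeastI) fact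
    have p2: "p \<le> n - 1" unfolding p_def by (rule Least_le) fact
    have "\<forall>k<p. (0,k) \<in> S" unfolding p_def using not_less_Least by blast
    then have "S \<in> Bp n p" using S p1 unfolding Bp_def by auto
    then show "S \<in> (\<Union>p<n. Bp n p)" using p2 assms by auto
  qed
qed (auto simp: Bp_def)

lemma Bp_disj: "p \<noteq> q \<Longrightarrow> Bp n p \<inter> Bp n q = {}"
  unfolding Bp_def by (auto simp: linorder_neq_iff)

lemma card_ID_sum: assumes "n \<ge> 1" shows "card (ID n) = (\<Sum>p<n. card (Bp n p))"
proof -
  have "card (\<Union>p<n. Bp n p) = (\<Sum>p<n. card (Bp n p))"
  proof (rule card_UN_disjoint)
    show "\<forall>i\<in>{..<n}. finite (Bp n i)"
      using finite_ID by (auto simp: Bp_def)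
  qed (use Bp_disj in auto)
  then show ?thesis using ID_Un[OF assms] by simp
qed

definition up :: "(nat \<times> nat) set \<Rightarrow> (nat \<times> nat) set" where
  "up S = {(m, Suc k) | m k. (m,k) \<in> S}"
definition down :: "(nat \<times> nat) set \<Rightarrow> (nat \<times> nat) set" where
  "down S = {(m,k). (m, Suc k) \<in> S}"

lemma down_up: "down (up S) = S" unfolding up_def down_def by auto

lemma up_down: "(\<forall>m. (m,0) \<notin> S) \<Longrightarrow> up (down S) = S"
  unfolding up_def down_def by auto (metis not0_implies_Suc)

lemma up_ID: "S \<in> ID n \<Longrightarrow> up S \<in> Bp (Suc n) 0"
proof -
  assume S: "S \<in> ID n"
  have "up S \<subseteq> P (Suc n)" using S unfolding up_def ID_def P_def by auto
  moreover have "dcl (up S)"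
    unfolding dcl_def
  proof (intro allI impI)
    fix m k assume "(Suc m, k) \<in> up S"
    then obtain k0 where k0: "k = Suc k0" "(Suc m, k0) \<in> S" unfolding up_def by auto
    then have "k0 \<ge> 2" using S unfolding ID_def P_def by auto
    have "(m,k0) \<in> S" "(m,k0-1) \<in> S" "(m,k0-2) \<in> S" using k0 S unfolding ID_def dcl_def by auto
    then have "(m, Suc k0) \<in> up S" "(m, Suc (k0-1)) \<in> up S" "(m, Suc (k0-2)) \<in> up S"
      unfolding up_def by blast+
    moreover have "Suc (k0-1) = k - 1" "Suc (k0-2) = k - 2" using k0 \<open>k0 \<ge> 2\<close> by arith+
    ultimately show "(m, k) \<in> up S \<and> (m, k - 1) \<in> up S \<and> (m, k - 2) \<in> up S"
      using k0 by simp
  qed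
  moreover have "(0,0) \<notin> up S" unfolding up_def by auto
  ultimately show ?thesis unfolding Bp_def ID_def by auto
qed

lemma down_ID: "S \<in> Bp (Suc n) 0 \<Longrightarrow> down S \<in> ID n \<and> (\<forall>m. (m,0) \<notin> S)"
proof -
  assume S: "S \<in> Bp (Suc n) 0"
  then have dS: "dcl S" and sub: "S \<subseteq> P (Suc n)" and z: "(0,0) \<notin> S" unfolding Bp_def ID_def by auto
  have nd: "k \<ge> Suc (2*m)" if "(m,k) \<in> S" for m k
    using diag[OF dS that] z by (cases "k \<le> 2*m") auto
  have "down S \<subseteq> P n" using sub nd unfolding down_def P_def by fastforce
  moreover have "dcl (down S)"
    unfolding dcl_def
  proof (intro allI impI)
    fix m k assume "(Suc m, k) \<in> down S"
    then have a: "(Suc m, Suc k) \<in> S" unfolding down_def by auto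
    then have "k \<ge> 2" using nd[OF a] by auto
    from dS a have "(m, Suc k) \<in> S \<and> (m, Suc k - 1) \<in> S \<and> (m, Suc k - 2) \<in> S"
      unfolding dcl_def by blast
    then have "(m,Suc k) \<in> S" "(m,k) \<in> S" "(m,k-1) \<in> S" by auto
    then show "(m, k) \<in> down S \<and> (m, k - 1) \<in> down S \<and> (m, k - 2) \<in> down S"
      using \<open>k \<ge> 2\<close> unfolding down_def by (auto simp: Suc_diff_Suc numeral_2_eq_2)
  qed
  ultimately show ?thesis using nd unfolding ID_def by fastforce
qed

lemma card_B0: "card (Bp (Suc n) 0) = card (ID n)"
proof -
  have "bij_betw up (ID n) (Bp (Suc n) 0)"
  proof (rule bij_betw_byWitness[where f' = down])
    show "\<forall>a\<in>ID n. down (up a) = a" by (simp add: down_up)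
    show "\<forall>a'\<in>Bp (Suc n) 0. up (down a') = a'" using down_ID up_down by blast
    show "up ` ID n \<subseteq> Bp (Suc n) 0" using up_ID by blast
    show "down ` Bp (Suc n) 0 \<subseteq> ID n" using down_ID by blast
  qed
  then show ?thesis by (simp add: bij_betw_same_card)
qed

definition Lf :: "nat \<Rightarrow> (nat \<times> nat) set \<Rightarrow> (nat \<times> nat) set" where
  "Lf p S = {(m,k). (Suc m, k+2) \<in> S \<and> k + 3 \<le> p}"
definition Rt :: "nat \<Rightarrow> (nat \<times> nat) set \<Rightarrow> (nat \<times> nat) set" where
  "Rt p S = {(m,k). (m, k+p+1) \<in> S}"
definition G :: "nat \<Rightarrow> (nat \<times> nat) set \<Rightarrow> (nat \<times> nat) set \<Rightarrow> (nat \<times> nat) set" where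
  "G p A B = {(0,k) | k. k < p} \<union> {(Suc m, k+2) | m k. (m,k)\<in>A} \<union> {(m,k+p+1) | m k. (m,k)\<in>B}"

lemma Lf_G: "A \<in> ID (p-1) \<Longrightarrow> Lf p (G p A B) = A"
  unfolding Lf_def G_def ID_def P_def by auto

lemma Rt_G: "A \<in> ID (p-1) \<Longrightarrow> Rt p (G p A B) = B"
  unfolding Rt_def G_def ID_def P_def by auto

lemma G_Bp:
  assumes A: "A \<in> ID (p-1)" and B: "B \<in> ID (n-1-p)" and p: "1 \<le> p" "p < n"
  shows "G p A B \<in> Bp n p"
proof -
  have AP: "A \<subseteq> P (p-1)" and Ad: "dcl A" using A unfolding ID_def by auto
  have BP: "B \<subseteq> P (n-1-p)" and Bd: "dcl B" using B unfolding ID_def by auto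
  have "G p A B \<subseteq> P n"
  proof
    fix x assume "x \<in> G p A B"
    then consider (r) k where "x = (0,k)" "k < p"
      | (a) m k where "x = (Suc m, k+2)" "(m,k) \<in> A"
      | (b) m k where "x = (m,k+p+1)" "(m,k) \<in> B"
      unfolding G_def by blast
    then show "x \<in> P n"
    proof cases
      case r then show ?thesis using p unfolding P_def by auto
    next
      case a then show ?thesis using AP p unfolding P_def by auto
    next
      case b then show ?thesis using BP p unfolding P_def by auto
    qed
  qed
  moreover have "dcl (G p A B)"
    unfolding dcl_def
  proof (intro allI impI)
    fix m k assume x: "(Suc m, k) \<in> G p A B"
    then consider (a) k' where "k = k'+2" "(m,k') \<in> A"
      | (b) k' where "k = k'+p+1" "(Suc m,k') \<in> B"
      unfolding G_def by blast
    then show "(m, k) \<in> G p A B \<and> (m, k - 1) \<in> G p A B \<and> (m, k - 2) \<in> G p A B"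
    proof cases
      case a
      show ?thesis
      proof (cases m)
        case 0
        then show ?thesis using a AP unfolding G_def P_def by auto
      next
        case (Suc m')
        have "(m',k') \<in> A \<and> (m',k'-1) \<in> A \<and> (m',k'-2) \<in> A" using a Ad Suc unfolding dcl_def by blast
        moreover have "k' \<ge> 2" using a AP Suc unfolding P_def by auto
        ultimately have "(Suc m', k'+2) \<in> G p A B \<and> (Suc m', (k'-1)+2) \<in> G p A B \<and> (Suc m', (k'-2)+2) \<in> G p A B"
          unfolding G_def by blast
        moreover have "(k'-1)+2 = k - 1" "(k'-2)+2 = k-2" "k'+2 = k" using a \<open>k' \<ge> 2\<close> by arith+
        ultimately show ?thesis using Suc by metis
      qed
    next
      case b
      have "(m,k') \<in> B \<and> (m,k'-1) \<in> B \<and> (m,k'-2) \<in> B" using b Bd unfolding dcl_def by blast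
      moreover have "k' \<ge> 2" using b BP unfolding P_def by auto
      ultimately have "(m, k'+p+1) \<in> G p A B \<and> (m, (k'-1)+p+1) \<in> G p A B \<and> (m, (k'-2)+p+1) \<in> G p A B"
        unfolding G_def by blast
      moreover have "(k'-1)+p+1 = k - 1" "(k'-2)+p+1 = k-2" "k'+p+1 = k" using b \<open>k' \<ge> 2\<close> by arith+
      ultimately show ?thesis by metis
    qed
  qed
  moreover have "\<forall>k<p. (0,k) \<in> G p A B" unfolding G_def by auto
  moreover have "(0,p) \<notin> G p A B" unfolding G_def by auto
  ultimately show ?thesis unfolding Bp_def ID_def by auto
qed

lemma Bp_split:
  assumes S: "S \<in> Bp n p" and p: "1 \<le> p" "p < n"
  shows "Lf p S \<in> ID (p-1) \<and> Rt p S \<in> ID (n-1-p) \<and> G p (Lf p S) (Rt p S) = S"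
proof -
  have SP: "S \<subseteq> P n" and Sd: "dcl S" and row: "\<forall>k<p. (0,k) \<in> S" and np: "(0,p) \<notin> S"
    using S unfolding Bp_def ID_def by auto
  have excl: "\<not> (p \<le> k \<and> k \<le> p + 2*m)" if "(m,k) \<in> S" for m k
    using cone[OF Sd that] np by blast
  have LP: "Lf p S \<subseteq> P (p-1)" using SP unfolding Lf_def P_def by auto
  have Ld: "dcl (Lf p S)"
    unfolding dcl_def
  proof (intro allI impI)
    fix m k assume "(Suc m, k) \<in> Lf p S"
    then have a: "(Suc (Suc m), k+2) \<in> S" "k + 3 \<le> p" unfolding Lf_def by auto
    then have "k \<ge> 2" using SP unfolding P_def by auto
    have "(Suc m, k+2) \<in> S \<and> (Suc m, k+2-1) \<in> S \<and> (Suc m, k+2-2) \<in> S"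
      using a Sd unfolding dcl_def by blast
    moreover have "k+2-1 = (k-1)+2" "k+2-2 = (k-2)+2" using \<open>k\<ge>2\<close> by arith+
    ultimately show "(m, k) \<in> Lf p S \<and> (m, k - 1) \<in> Lf p S \<and> (m, k - 2) \<in> Lf p S"
      using a unfolding Lf_def by auto
  qed
  have RP: "Rt p S \<subseteq> P (n-1-p)"
  proof
    fix x assume "x \<in> Rt p S"
    then obtain m k where x: "x = (m,k)" "(m, k+p+1) \<in> S" unfolding Rt_def by auto
    then have "2*m \<le> k" using excl[OF x(2)] by auto
    then show "x \<in> P (n-1-p)" using x SP unfolding P_def by auto
  qed
  have Rd: "dcl (Rt p S)"
    unfolding dcl_def
  proof (intro allI impI)
    fix m k assume k: "(Suc m, k) \<in> Rt p S"
    then have a: "(Suc m, k+p+1) \<in> S" unfolding Rt_def by auto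
    have "k \<ge> 2" using RP k unfolding P_def by auto
    have "(m, k+p+1) \<in> S \<and> (m, k+p+1-1) \<in> S \<and> (m, k+p+1-2) \<in> S"
      using a Sd unfolding dcl_def by blast
    moreover have "k+p+1-1 = (k-1)+p+1" "k+p+1-2 = (k-2)+p+1" using \<open>k\<ge>2\<close> by arith+
    ultimately show "(m, k) \<in> Rt p S \<and> (m, k - 1) \<in> Rt p S \<and> (m, k - 2) \<in> Rt p S"
      unfolding Rt_def by auto
  qed
  have "G p (Lf p S) (Rt p S) = S"
  proof
    show "G p (Lf p S) (Rt p S) \<subseteq> S" using row unfolding G_def Lf_def Rt_def by auto
    show "S \<subseteq> G p (Lf p S) (Rt p S)"
    proof
      fix x assume xS: "x \<in> S"
      obtain m k where x: "x = (m,k)" by force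
      have mk: "(m,k) \<in> S" using xS x by simp
      show "x \<in> G p (Lf p S) (Rt p S)"
      proof (cases "k < p")
        case True
        show ?thesis
        proof (cases m)
          case 0 then show ?thesis using True x unfolding G_def by auto
        next
          case (Suc m')
          have "k \<ge> 2" using mk SP Suc unfolding P_def by auto
          then have e: "k-2+2 = k" by arith
          then have "(Suc m', k-2+2) \<in> S" using mk Suc by simp
          then have "(m', k-2) \<in> Lf p S" using True \<open>k\<ge>2\<close> unfolding Lf_def by auto
          then have "(Suc m', (k-2)+2) \<in> G p (Lf p S) (Rt p S)" unfolding G_def by blast
          then show ?thesis using x Suc e by metis
        qed
      next
        case False
        then have "k > p + 2*m" using excl[OF mk] by auto
        then have "(m, k-p-1) \<in> Rt p S" "x = (m, (k-p-1)+p+1)" using mk x unfolding Rt_def by auto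
        then show ?thesis unfolding G_def by blast
      qed
    qed
  qed
  then show ?thesis using LP Ld RP Rd unfolding ID_def by auto
qed

lemma card_Bp: assumes p: "1 \<le> p" "p < n"
  shows "card (Bp n p) = card (ID (p-1)) * card (ID (n-1-p))"
proof -
  have "bij_betw (\<lambda>(A,B). G p A B) (ID (p-1) \<times> ID (n-1-p)) (Bp n p)"
  proof (rule bij_betw_byWitness[where f' = "\<lambda>S. (Lf p S, Rt p S)"])
    show "\<forall>a\<in>ID (p - 1) \<times> ID (n - 1 - p). (Lf p (case a of (A, B) \<Rightarrow> G p A B), Rt p (case a of (A, B) \<Rightarrow> G p A B)) = a"
      using Lf_G Rt_G by auto
    show "\<forall>a'\<in>Bp n p. (case (Lf p a', Rt p a') of (A, B) \<Rightarrow> G p A B) = a'"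
      using Bp_split p by auto
    show "(\<lambda>(A, B). G p A B) ` (ID (p - 1) \<times> ID (n - 1 - p)) \<subseteq> Bp n p"
      using G_Bp p by auto
    show "(\<lambda>S. (Lf p S, Rt p S)) ` Bp n p \<subseteq> ID (p - 1) \<times> ID (n - 1 - p)"
      using Bp_split p by auto
  qed
  then have "card (Bp n p) = card (ID (p-1) \<times> ID (n-1-p))" by (simp add: bij_betw_same_card)
  then show ?thesis by (simp add: card_cartesian_product)
qed

lemma ID_rec: "card (ID (Suc (Suc n))) = card (ID (Suc n)) + (\<Sum>a\<le>n. card (ID a) * card (ID (n - a)))"
proof -
  have "card (ID (Suc (Suc n))) = (\<Sum>p<Suc (Suc n). card (Bp (Suc (Suc n)) p))"
    by (rule card_ID_sum) simp
  also have "\<dots> = card (Bp (Suc (Suc n)) 0) + (\<Sum>a<Suc n. card (Bp (Suc (Suc n)) (Suc a)))"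
    by (simp only: sum.lessThan_Suc_shift)
  also have "(\<Sum>a<Suc n. card (Bp (Suc (Suc n)) (Suc a))) = (\<Sum>a\<le>n. card (ID a) * card (ID (n - a)))"
    unfolding lessThan_Suc_atMost
    by (rule sum.cong) (auto simp: card_Bp)
  finally show ?thesis by (simp add: card_B0)
qed



definition enc :: "nat \<Rightarrow> nat \<times> nat \<Rightarrow> nat" where
  "enc s x = fst x * s + snd x + 1"

lemma repr_lemma:
  fixes n k1 k2 k3 s :: nat
  assumes "n = k1 * s + k2 * (s + 1) + k3 * (s + 2)"
  shows "n = (k1+k2+k3) * s + (k2 + 2*k3)"
  using assms by (simp add: algebra_simps)

lemma T_char: assumes "s \<ge> 1"
  shows "n \<in> T s \<longleftrightarrow> (\<exists>m k. (m,k) \<in> P s \<and> n = enc s (m,k))"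
proof
  assume n: "n \<in> T s"
  define q where "q = n div s"
  define j where "j = n mod s"
  have nqj: "n = q * s + j" unfolding q_def j_def by simp
  have js: "j < s" unfolding j_def using assms by simp
  have "j > 2*q"
  proof (rule ccontr)
    assume "\<not> j > 2*q"
    then have le: "j div 2 + j mod 2 \<le> q" by presburger
    have alg: "\<And>c a b::nat. (c - (a+b))*s + b*(s+1) + a*(s+2) = ((c-(a+b)) + b + a)*s + (b + 2*a)"
      by (simp add: algebra_simps)
    have "n = (q - (j div 2 + j mod 2)) * s + (j mod 2) * (s+1) + (j div 2) * (s+2)"
    proof -
      have "(q - (j div 2 + j mod 2)) * s + (j mod 2) * (s+1) + (j div 2) * (s+2)
          = ((q - (j div 2 + j mod 2)) + (j mod 2) + (j div 2)) * s + (j mod 2 + 2 * (j div 2))"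
        using alg[of q "j div 2" "j mod 2"] by simp
      also have "(q - (j div 2 + j mod 2)) + (j mod 2) + (j div 2) = q" using le by simp
      also have "j mod 2 + 2 * (j div 2) = j" by presburger
      finally show ?thesis using nqj by simp
    qed
    then show False using n unfolding T_def by blast
  qed
  then show "\<exists>m k. (m,k) \<in> P s \<and> n = enc s (m,k)"
    using js nqj by (intro exI[of _ q] exI[of _ "j-1"]) (auto simp: P_def enc_def)
next
  assume "\<exists>m k. (m,k) \<in> P s \<and> n = enc s (m,k)"
  then obtain m k where mk: "2*m \<le> k" "k+2 \<le> s" "n = m*s + k + 1" unfolding P_def enc_def by auto
  have "\<not> (\<exists>k1 k2 k3. n = k1 * s + k2 * (s + 1) + k3 * (s + 2))"
  proof
    assume "\<exists>k1 k2 k3. n = k1 * s + k2 * (s + 1) + k3 * (s + 2)"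
    then obtain M e where Me: "n = M * s + e" "e \<le> 2*M"
      using repr_lemma by fastforce
    consider "M < m" | "M = m" | "M > m" by linarith
    then show False
    proof cases
      case 1
      then have "M*s + s \<le> m*s" by (metis Suc_leI mult_Suc mult_le_mono1 add.commute)
      then show ?thesis using Me mk 1 by linarith
    next
      case 2 then have "M*s = m*s" by simp
      then show ?thesis using Me mk 2 by linarith
    next
      case 3
      then have "m*s + s \<le> M*s" by (metis Suc_leI mult_Suc mult_le_mono1 add.commute)
      then show ?thesis using Me mk by linarith
    qed
  qed
  then show "n \<in> T s" using mk unfolding T_def by auto
qed

lemma T_eq: "s \<ge> 1 \<Longrightarrow> T s = enc s ` P s"
  using T_char by auto

lemma enc_inj: "inj_on (enc s) (P s)"
proof (rule inj_onI)
  fix x y assume x: "x \<in> P s" and y: "y \<in> P s" and e: "enc s x = enc s y"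
  obtain m k where xx: "x = (m,k)" by force
  obtain m' k' where yy: "y = (m',k')" by force
  have kk: "k < s" "k' < s" using x y xx yy unfolding P_def by auto
  have e2: "m*s + k = m'*s + k'" using e xx yy unfolding enc_def by simp
  have "m = m'"
  proof (rule ccontr)
    assume "m \<noteq> m'"
    then consider "m < m'" | "m' < m" by linarith
    then show False
    proof cases
      case 1
      then have "m*s + s \<le> m'*s" by (metis Suc_leI mult_Suc mult_le_mono1 add.commute)
      then show ?thesis using e2 kk by linarith
    next
      case 2
      then have "m'*s + s \<le> m*s" by (metis Suc_leI mult_Suc mult_le_mono1 add.commute)
      then show ?thesis using e2 kk by linarith
    qed
  qed
  then show "x = y" using e2 xx yy by simp
qed

lemma step_fwd:
  assumes x: "(Suc m, k) \<in> P s" and d: "d \<le> 2"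
  shows "T_step s (enc s (Suc m, k)) (enc s (m, k - d))"
proof -
  have s1: "s \<ge> 1" using x unfolding P_def by auto
  have kd: "k \<ge> 2" using x unfolding P_def by auto
  have y: "(m, k - d) \<in> P s" using x d unfolding P_def by auto
  have "enc s (Suc m, k) - enc s (m, k-d) = s + d" using kd d unfolding enc_def by simp
  moreover have "enc s (m, k-d) < enc s (Suc m, k)" using kd d s1 unfolding enc_def by simp
  ultimately show ?thesis unfolding T_step_def using T_eq[OF s1] x y d by auto
qed

lemma step_bwd:
  assumes x: "(m, k) \<in> P s" and y: "(m', k') \<in> P s"
    and st: "T_step s (enc s (m, k)) (enc s (m', k'))"
  shows "m = Suc m' \<and> (k' = k \<or> k' = k - 1 \<or> k' = k - 2)"
proof -
  have lt: "m'*s + k' < m*s + k" and dd: "m*s + k - (m'*s + k') \<in> {s, s+1, s+2}"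
    using st unfolding T_step_def enc_def by auto
  have kk: "2*m \<le> k" "k+2 \<le> s" "2*m' \<le> k'" "k'+2 \<le> s" using x y unfolding P_def by auto
  obtain d where dd2: "m*s + k = m'*s + k' + d" "s \<le> d" "d \<le> s+2"
    using lt dd by (intro that[of "m*s + k - (m'*s + k')"]) auto
  consider "m \<le> m'" | "m = Suc m'" | "m \<ge> m' + 2" by linarith
  then show ?thesis
  proof cases
    case 1
    then have "m*s \<le> m'*s" by simp
    then show ?thesis using dd2 kk by linarith
  next
    case 2
    then have "m*s = m'*s + s" by simp
    then have "s + k = k' + d" using dd2 by linarith
    then have "k' = k \<or> k' = k - 1 \<or> k' = k - 2" using dd2 by linarith
    then show ?thesis using 2 by simp
  next
    case 3
    then have "(m'+2)*s \<le> m*s" by (rule mult_le_mono1)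
    then have "m'*s + 2*s \<le> m*s" by (simp add: algebra_simps)
    then show ?thesis using dd2 kk 3 by linarith
  qed
qed

lemma oi_step: "I \<in> order_ideals s \<longleftrightarrow> I \<subseteq> T s \<and> (\<forall>y\<in>I. \<forall>x. T_step s y x \<longrightarrow> x \<in> I)"
proof
  assume "I \<in> order_ideals s"
  then show "I \<subseteq> T s \<and> (\<forall>y\<in>I. \<forall>x. T_step s y x \<longrightarrow> x \<in> I)"
    unfolding order_ideals_def T_ge_def T_step_def by (auto simp: T_step_def)
next
  assume a: "I \<subseteq> T s \<and> (\<forall>y\<in>I. \<forall>x. T_step s y x \<longrightarrow> x \<in> I)"
  have "x \<in> I" if "(T_step s)\<^sup>*\<^sup>* y x" "y \<in> I" for x y
    using that
  proof (induction rule: rtranclp_induct)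
    case base then show ?case .
  next
    case (step z x) then show ?case using a by blast
  qed
  then show "I \<in> order_ideals s" using a unfolding order_ideals_def T_ge_def by auto
qed

lemma encP_T: "s \<ge> 1 \<Longrightarrow> x \<in> P s \<Longrightarrow> enc s x \<in> T s"
  using T_eq by auto

lemma closed_dcl:
  assumes s: "s \<ge> 1" and SP: "S \<subseteq> P s"
  shows "(\<forall>y\<in>enc s ` S. \<forall>x. T_step s y x \<longrightarrow> x \<in> enc s ` S) \<longleftrightarrow> dcl S"
proof
  assume c: "\<forall>y\<in>enc s ` S. \<forall>x. T_step s y x \<longrightarrow> x \<in> enc s ` S"
  show "dcl S" unfolding dcl_def
  proof (intro allI impI)
    fix m k assume mk: "(Suc m, k) \<in> S"
    then have mkP: "(Suc m, k) \<in> P s" using SP by auto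
    have "(m, k - d) \<in> S" if d: "d \<le> 2" for d
    proof -
      have "enc s (m, k-d) \<in> enc s ` S" using c mk step_fwd[OF mkP d] by blast
      moreover have "(m, k-d) \<in> P s" using mkP d unfolding P_def by auto
      ultimately show ?thesis using enc_inj[of s] SP by (auto simp: inj_on_def)
    qed
    from this[of 0] this[of 1] this[of 2]
    show "(m, k) \<in> S \<and> (m, k - 1) \<in> S \<and> (m, k - 2) \<in> S" by simp
  qed
next
  assume d: "dcl S"
  show "\<forall>y\<in>enc s ` S. \<forall>x. T_step s y x \<longrightarrow> x \<in> enc s ` S"
  proof (intro ballI allI impI)
    fix y x assume y: "y \<in> enc s ` S" and st: "T_step s y x"
    obtain m k where mk: "(m,k) \<in> S" "y = enc s (m,k)" using y by auto
    have "x \<in> T s" using st unfolding T_step_def by auto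
    then obtain m' k' where mk': "(m',k') \<in> P s" "x = enc s (m',k')" using T_char[OF s] by auto
    have "m = Suc m' \<and> (k' = k \<or> k' = k - 1 \<or> k' = k - 2)"
      using step_bwd[of m k s m' k'] mk mk' st SP by auto
    then have "(m',k') \<in> S" using d mk unfolding dcl_def by auto
    then show "x \<in> enc s ` S" using mk' by auto
  qed
qed

lemma card_oi: assumes s: "s \<ge> 1" shows "card (order_ideals s) = card (ID s)"
proof -
  have "bij_betw (image (enc s)) (ID s) (order_ideals s)"
  proof (rule bij_betw_byWitness[where f' = "\<lambda>I. {x \<in> P s. enc s x \<in> I}"])
    show "\<forall>a\<in>ID s. {x \<in> P s. enc s x \<in> enc s ` a} = a"
    proof
      fix a assume "a \<in> ID s"
      then have aP: "a \<subseteq> P s" unfolding ID_def by auto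
      show "{x \<in> P s. enc s x \<in> enc s ` a} = a"
      proof
        show "{x \<in> P s. enc s x \<in> enc s ` a} \<subseteq> a"
        proof
          fix x assume "x \<in> {x \<in> P s. enc s x \<in> enc s ` a}"
          then obtain y where "x \<in> P s" "y \<in> a" "enc s x = enc s y" by auto
          then have "x = y" using inj_onD[OF enc_inj[of s]] aP by blast
          then show "x \<in> a" using \<open>y \<in> a\<close> by simp
        qed
      qed (use aP in auto)
    qed
    show "\<forall>a'\<in>order_ideals s. enc s ` {x \<in> P s. enc s x \<in> a'} = a'"
    proof
      fix I assume "I \<in> order_ideals s"
      then have "I \<subseteq> enc s ` P s" using T_eq[OF s] unfolding oi_step by auto
      then show "enc s ` {x \<in> P s. enc s x \<in> I} = I" by auto
    qed
    show "image (enc s) ` ID s \<subseteq> order_ideals s"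
    proof
      fix I assume "I \<in> image (enc s) ` ID s"
      then obtain S where S: "S \<in> ID s" "I = enc s ` S" by auto
      then have "I \<subseteq> T s" using T_eq[OF s] unfolding ID_def by auto
      then show "I \<in> order_ideals s" unfolding oi_step using closed_dcl[OF s] S unfolding ID_def by auto
    qed
    show "(\<lambda>I. {x \<in> P s. enc s x \<in> I}) ` order_ideals s \<subseteq> ID s"
    proof
      fix S assume "S \<in> (\<lambda>I. {x \<in> P s. enc s x \<in> I}) ` order_ideals s"
      then obtain I where I: "I \<in> order_ideals s" "S = {x \<in> P s. enc s x \<in> I}" by auto
      have "I \<subseteq> enc s ` P s" using I T_eq[OF s] unfolding oi_step by auto
      then have eq: "enc s ` S = I" using I(2) by auto
      have "S \<subseteq> P s" using I by auto
      moreover have "dcl S" using closed_dcl[OF s \<open>S \<subseteq> P s\<close>] I(1) eq unfolding oi_step by auto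
      ultimately show "S \<in> ID s" unfolding ID_def by auto
    qed
  qed
  then show ?thesis by (simp add: bij_betw_same_card)
qed

lemma T0: "T 0 = {}"
proof -
  have "\<And>x::nat. x = 0 * 0 + x * (0 + 1) + 0 * (0 + 2)" by simp
  then show ?thesis unfolding T_def by blast
qed

lemma oi0: "order_ideals 0 = {{}}"
  unfolding order_ideals_def T0 by auto

lemma ID01: "n \<le> 1 \<Longrightarrow> ID n = {{}}"
  unfolding ID_def P_def dcl_def by auto



definition bt :: "nat list \<Rightarrow> nat \<Rightarrow> nat" where
  "bt lam i = lam!i + (length lam - Suc i)"
definition beta :: "nat list \<Rightarrow> nat set" where
  "beta lam = bt lam ` {..<length lam}"
definition bj :: "nat list \<Rightarrow> nat \<Rightarrow> nat" where
  "bj lam j = j + length lam - conj_part lam j"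

lemma part_nth: "is_partition lam \<Longrightarrow> i \<le> i' \<Longrightarrow> i' < length lam \<Longrightarrow> lam!i' \<le> lam!i"
  unfolding is_partition_def
  by (cases "i = i'") (auto simp: sorted_wrt_iff_nth_less)

lemma part_pos: "is_partition lam \<Longrightarrow> i < length lam \<Longrightarrow> lam!i > 0"
  unfolding is_partition_def by auto

lemma bt_gap: "is_partition lam \<Longrightarrow> i \<le> i' \<Longrightarrow> i' < length lam \<Longrightarrow> bt lam i' + (i' - i) \<le> bt lam i"
  using part_nth[of lam i i'] unfolding bt_def by auto

lemma bt_lower: "is_partition lam \<Longrightarrow> i < length lam \<Longrightarrow> length lam - i \<le> bt lam i"
  using part_pos[of lam i] unfolding bt_def by auto

lemma downclosed: "finite S \<Longrightarrow> (\<And>k k'. k \<in> S \<Longrightarrow> k' \<le> k \<Longrightarrow> k' \<in> S) \<Longrightarrow> S = {..<card S}"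
proof (cases "S = {}")
  case False
  assume f: "finite S" and d: "\<And>k k'. k \<in> S \<Longrightarrow> k' \<le> k \<Longrightarrow> k' \<in> S"
  define M where "M = Max S"
  have "M \<in> S" using f False unfolding M_def by simp
  have "S = {..M}"
  proof
    show "S \<subseteq> {..M}" using f unfolding M_def by auto
    show "{..M} \<subseteq> S" using d \<open>M \<in> S\<close> by auto
  qed
  then show ?thesis by (simp add: lessThan_Suc_atMost[symmetric])
qed simp

lemma conj_set: "conj_part lam j = card {k. k < length lam \<and> j < lam!k}"
  unfolding conj_part_def by (rule length_filter_conv_card)

lemma conj_prefix:
  assumes p: "is_partition lam"
  shows "{k. k < length lam \<and> j < lam!k} = {..<conj_part lam j}"
proof -
  have "{k. k < length lam \<and> j < lam!k} = {..<card {k. k < length lam \<and> j < lam!k}}"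
  proof (rule downclosed)
    show "finite {k. k < length lam \<and> j < lam ! k}" by simp
    fix k k' assume "k \<in> {k. k < length lam \<and> j < lam ! k}" "k' \<le> k"
    then show "k' \<in> {k. k < length lam \<and> j < lam ! k}"
      using part_nth[OF p, of k' k] by auto
  qed
  then show ?thesis by (simp add: conj_set)
qed

lemma conj_iff: "is_partition lam \<Longrightarrow> k < length lam \<Longrightarrow> (j < lam!k \<longleftrightarrow> k < conj_part lam j)"
  using conj_prefix[of lam j] by (auto simp: set_eq_iff)

lemma conj_le: "conj_part lam j \<le> length lam"
  unfolding conj_part_def by simp

lemma bt_Suc: "k < length lam \<Longrightarrow> bt lam k + k + 1 = lam!k + length lam"
  unfolding bt_def by simp

lemma H1: assumes p: "is_partition lam" shows "bj lam j \<notin> beta lam"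
proof
  assume "bj lam j \<in> beta lam"
  then obtain k where k: "k < length lam" "bj lam j = bt lam k" unfolding beta_def by auto
  define c where "c = conj_part lam j"
  have cl: "c \<le> length lam" unfolding c_def by (rule conj_le)
  have bjc: "bj lam j + c = j + length lam" unfolding bj_def c_def using conj_le[of lam j] by simp
  have e: "bt lam k + k + 1 = lam!k + length lam" using bt_Suc[OF k(1)] .
  show False
  proof (cases "j < lam!k")
    case True
    then have "k < c" using conj_iff[OF p k(1)] unfolding c_def by simp
    then show False using True e bjc k(2) by linarith
  next
    case False
    then have "\<not> k < c" using conj_iff[OF p k(1)] unfolding c_def by simp
    then show False using False e bjc k(2) by linarith
  qed
qed

lemma hook_eq:
  assumes p: "is_partition lam" and i: "i < length lam" and j: "j < lam!i"
  shows "hook lam i j = bt lam i - bj lam j \<and> bj lam j < bt lam i"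
proof -
  define c where "c = conj_part lam j"
  have ic: "i < c" using conj_iff[OF p i] j unfolding c_def by simp
  have cl: "c \<le> length lam" unfolding c_def by (rule conj_le)
  have bjc: "bj lam j + c = j + length lam" unfolding bj_def c_def using conj_le[of lam j] by simp
  have e: "bt lam i + i + 1 = lam!i + length lam" using bt_Suc[OF i] .
  have h: "hook lam i j = (lam!i - j - 1) + (c - i - 1) + 1" unfolding hook_def c_def by simp
  show ?thesis using h e bjc ic j by linarith
qed

lemma H2:
  assumes p: "is_partition lam" and i: "i < length lam" and y: "y \<notin> beta lam" "y < bt lam i"
  shows "\<exists>j < lam!i. bj lam j = y"
proof -
  define C where "C = {k. k < length lam \<and> y < bt lam k}"
  define c where "c = card C"
  have Cc: "C = {..<c}" unfolding c_def
  proof (rule downclosed)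
    show "finite C" unfolding C_def by simp
    fix k k' assume "k \<in> C" "k' \<le> k"
    then show "k' \<in> C" unfolding C_def using bt_gap[OF p, of k' k] by auto
  qed
  have kc: "k < length lam \<Longrightarrow> (y < bt lam k \<longleftrightarrow> k < c)" for k
    using Cc unfolding C_def by (auto simp: set_eq_iff)
  have cl: "c \<le> length lam"
  proof (rule ccontr)
    assume "\<not> c \<le> length lam"
    then have "length lam \<in> C" using Cc by auto
    then show False unfolding C_def by auto
  qed
  have ic: "i < c" using kc[OF i] y(2) by simp
  have notin: "k < length lam \<Longrightarrow> bt lam k \<noteq> y" for k using y(1) unfolding beta_def by auto
  have lyc: "length lam \<le> y + c"
  proof (cases "c = length lam")
    case False
    then have cl2: "c < length lam" using cl by simp
    then have "\<not> y < bt lam c" using kc by simp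
    then have "bt lam c < y" using notin[OF cl2] by simp
    moreover have "length lam - c \<le> bt lam c" using bt_lower[OF p cl2] .
    ultimately show ?thesis by linarith
  qed simp
  define j where "j = y + c - length lam"
  have key: "k < length lam \<Longrightarrow> (j < lam!k \<longleftrightarrow> k < c)" for k
  proof -
    assume k: "k < length lam"
    have e: "bt lam k + k + 1 = lam!k + length lam" using bt_Suc[OF k] .
    show "j < lam!k \<longleftrightarrow> k < c"
    proof
      assume "k < c"
      then have c1: "c - 1 < length lam" "k \<le> c - 1" using cl by auto
      have "bt lam (c-1) + (c - 1 - k) \<le> bt lam k" using bt_gap[OF p c1(2) c1(1)] .
      moreover have "y < bt lam (c-1)" using kc[OF c1(1)] \<open>k < c\<close> by simp
      ultimately show "j < lam!k" using e \<open>k < c\<close> lyc unfolding j_def by linarith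
    next
      assume jk: "j < lam!k"
      show "k < c"
      proof (rule ccontr)
        assume "\<not> k < c"
        then have ck: "c \<le> k" by simp
        have "bt lam k + (k - c) \<le> bt lam c" using bt_gap[OF p ck k] .
        moreover have "bt lam c < y"
        proof -
          have "c < length lam" using ck k by simp
          then show ?thesis using kc notin by (metis linorder_neqE_nat order_less_irrefl)
        qed
        ultimately show False using e ck jk lyc unfolding j_def by linarith
      qed
    qed
  qed
  have "{k. k < length lam \<and> j < lam!k} = {..<c}"
    using key cl by auto
  then have cj: "conj_part lam j = c" using conj_prefix[OF p, of j] by simp
  have "bj lam j = j + length lam - c" unfolding bj_def cj by simp
  then have "bj lam j = y" unfolding j_def using lyc by simp
  moreover have "j < lam!i" using key[OF i] ic by simp
  ultimately show ?thesis by blast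
qed

lemma bt_in: "i < length lam \<Longrightarrow> bt lam i \<in> beta lam"
  unfolding beta_def by auto

lemma beta_pos: "is_partition lam \<Longrightarrow> x \<in> beta lam \<Longrightarrow> 0 < x"
  unfolding beta_def using bt_lower by fastforce

lemma core_char:
  assumes p: "is_partition lam" and t: "0 < t"
  shows "is_core t lam \<longleftrightarrow> (\<forall>x\<in>beta lam. t \<le> x \<longrightarrow> x - t \<in> beta lam)"
proof
  assume c: "is_core t lam"
  show "\<forall>x\<in>beta lam. t \<le> x \<longrightarrow> x - t \<in> beta lam"
  proof (intro ballI impI)
    fix x assume x: "x \<in> beta lam" "t \<le> x"
    then obtain i where i: "i < length lam" "x = bt lam i" unfolding beta_def by auto
    show "x - t \<in> beta lam"
    proof (rule ccontr)
      assume "x - t \<notin> beta lam"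
      moreover have "x - t < bt lam i" using i x t by simp
      ultimately obtain j where j: "j < lam!i" "bj lam j = x - t" using H2[OF p i(1)] by blast
      have "hook lam i j = t" using hook_eq[OF p i(1) j(1)] j(2) i x by simp
      moreover have "(i,j) \<in> boxes lam" using i j unfolding boxes_def by auto
      ultimately show False using c unfolding is_core_def by auto
    qed
  qed
next
  assume cl: "\<forall>x\<in>beta lam. t \<le> x \<longrightarrow> x - t \<in> beta lam"
  show "is_core t lam" unfolding is_core_def
  proof (clarify)
    fix i j assume b: "(i,j) \<in> boxes lam" and dv: "t dvd hook lam i j"
    then have i: "i < length lam" and j: "j < lam!i" unfolding boxes_def by auto
    define B where "B = bj lam j"
    obtain q where q: "hook lam i j = q * t" using dv by (auto simp: dvd_def mult.commute)
    have he: "bt lam i = B + q * t" using hook_eq[OF p i j] q unfolding B_def by simp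
    have "\<forall>r. r \<le> q \<longrightarrow> B + (q - r) * t \<in> beta lam"
    proof (intro allI)
      fix r show "r \<le> q \<longrightarrow> B + (q - r) * t \<in> beta lam"
      proof (induction r)
        case 0 then show ?case using bt_in[OF i] he by simp
      next
        case (Suc r)
        show ?case
        proof
          assume "Suc r \<le> q"
          then have qs: "q - r = Suc (q - Suc r)" by simp
          have "B + (q - r) * t \<in> beta lam" using Suc \<open>Suc r \<le> q\<close> by simp
          moreover have "t \<le> B + (q - r) * t" using qs by simp
          ultimately have "B + (q - r) * t - t \<in> beta lam" using cl by blast
          moreover have "B + (q - r) * t - t = B + (q - Suc r) * t" using qs by simp
          ultimately show "B + (q - Suc r) * t \<in> beta lam" by simp
        qed
      qed
    qed
    then have "B \<in> beta lam" by (metis diff_self_eq_0 mult_0 add_0_right order_refl)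
    then show False using H1[OF p] unfolding B_def by blast
  qed
qed

definition bl :: "nat list \<Rightarrow> nat list" where
  "bl lam = map (bt lam) [0..<length lam]"

lemma bl_sorted: "is_partition lam \<Longrightarrow> sorted_wrt (<) (rev (bl lam))"
  unfolding sorted_wrt_rev bl_def
proof (subst sorted_wrt_iff_nth_less, intro allI impI)
  fix i j assume p: "is_partition lam" and ij: "i < j" "j < length (map (bt lam) [0..<length lam])"
  then have "bt lam j + (j - i) \<le> bt lam i" using bt_gap[OF p, of i j] by simp
  then show "map (bt lam) [0..<length lam] ! j < map (bt lam) [0..<length lam] ! i"
    using ij by simp
qed

lemma bl_set: "set (rev (bl lam)) = beta lam"
  unfolding bl_def beta_def by auto

lemma beta_inj: "is_partition lam \<Longrightarrow> is_partition mu \<Longrightarrow> beta lam = beta mu \<Longrightarrow> lam = mu"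
proof -
  assume p: "is_partition lam" and q: "is_partition mu" and e: "beta lam = beta mu"
  have "rev (bl lam) = rev (bl mu)"
    using bl_sorted[OF p] bl_sorted[OF q] bl_set[of lam] bl_set[of mu] e
    by (metis sorted_distinct_set_unique strict_sorted_iff)
  then have eq: "bl lam = bl mu" by simp
  then have l: "length lam = length mu" unfolding bl_def by (metis length_map length_upt diff_zero)
  show "lam = mu"
  proof (rule nth_equalityI)
    show "length lam = length mu" by (rule l)
    fix i assume i: "i < length lam"
    have "bl lam ! i = bl mu ! i" using eq by simp
    then have "bt lam i = bt mu i" using i l unfolding bl_def by simp
    then show "lam ! i = mu ! i" using i l unfolding bt_def by simp
  qed
qed

lemma strict_gap: "sorted_wrt (<) (xs::nat list) \<Longrightarrow> j < length xs \<Longrightarrow> i \<le> j \<Longrightarrow> xs!i + (j - i) \<le> xs!j"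
proof (induction j)
  case 0 then show ?case by simp
next
  case (Suc j)
  show ?case
  proof (cases "i = Suc j")
    case False
    then have "i \<le> j" using Suc by simp
    then have "xs!i + (j - i) \<le> xs!j" using Suc by simp
    moreover have "xs!j < xs!Suc j" using Suc.prems by (simp add: sorted_wrt_iff_nth_less)
    ultimately show ?thesis using \<open>i \<le> j\<close> by linarith
  qed simp
qed

lemma beta_surj:
  assumes f: "finite A" and z: "0 \<notin> A"
  shows "\<exists>lam. is_partition lam \<and> beta lam = A"
proof -
  define xs where "xs = sorted_list_of_set A"
  define l where "l = length xs"
  have sx: "sorted_wrt (<) xs" unfolding xs_def by simp
  have setx: "set xs = A" unfolding xs_def using f by simp
  have lowx: "p < l \<Longrightarrow> p + 1 \<le> xs!p" for p
  proof -
    assume pl: "p < l"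
    have "xs!0 \<in> A" using pl setx unfolding l_def by (metis gr_zeroI less_nat_zero_code nth_mem not_less_zero order.strict_trans1 le0)
    then have "1 \<le> xs!0" using z by (cases "xs!0") auto
    moreover have "xs!0 + (p - 0) \<le> xs!p" using strict_gap[OF sx, of p 0] pl unfolding l_def by simp
    ultimately show ?thesis by simp
  qed
  define lam where "lam = map (\<lambda>i. xs!(l-1-i) - (l-1-i)) [0..<l]"
  have ll: "length lam = l" unfolding lam_def by simp
  have lami: "i < l \<Longrightarrow> lam!i = xs!(l-1-i) - (l-1-i)" for i unfolding lam_def by simp
  have part: "is_partition lam"
    unfolding is_partition_def
  proof
    show "sorted_wrt (\<ge>) lam"
    proof (subst sorted_wrt_iff_nth_less, intro allI impI)
      fix i j assume ij: "i < j" "j < length lam"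
      have "xs!(l-1-j) + ((l-1-i) - (l-1-j)) \<le> xs!(l-1-i)"
        using strict_gap[OF sx, of "l-1-i" "l-1-j"] ij ll unfolding l_def by simp
      then show "lam!j \<le> lam!i" using ij ll lami by simp
    qed
    show "\<forall>x\<in>set lam. 0 < x"
    proof
      fix x assume "x \<in> set lam"
      then obtain i where i: "i < l" "x = lam!i" using ll by (auto simp: in_set_conv_nth)
      then show "0 < x" using lowx[of "l-1-i"] lami by simp
    qed
  qed
  have bte: "i < l \<Longrightarrow> bt lam i = xs!(l-1-i)" for i
    using lowx[of "l-1-i"] lami[of i] ll unfolding bt_def by simp
  have "beta lam = A"
  proof
    show "beta lam \<subseteq> A" unfolding beta_def using bte ll setx l_def by auto
    show "A \<subseteq> beta lam"
    proof
      fix x assume "x \<in> A"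
      then obtain p where p: "p < l" "x = xs!p" using setx unfolding l_def by (auto simp: in_set_conv_nth)
      then have "x = bt lam (l-1-p)" using bte[of "l-1-p"] by simp
      moreover have "l-1-p < length lam" using p ll by simp
      ultimately show "x \<in> beta lam" unfolding beta_def by auto
    qed
  qed
  then show ?thesis using part by blast
qed



definition cl3 :: "nat \<Rightarrow> nat set \<Rightarrow> bool" where
  "cl3 s B \<longleftrightarrow> (\<forall>x\<in>B. \<forall>t\<in>{s, s+1, s+2}. t \<le> x \<longrightarrow> x - t \<in> B)"

lemma cores_iff:
  assumes p: "is_partition lam" and s: "s \<ge> 1"
  shows "lam \<in> cores3 s \<longleftrightarrow> cl3 s (beta lam)"
  unfolding cores3_def cl3_def using core_char[OF p, of s] core_char[OF p, of "s+1"] core_char[OF p, of "s+2"] s p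
  by auto

lemma no_repr:
  assumes cl: "cl3 s B" and z: "0 \<notin> B"
  shows "\<forall>x k1 k2 k3. k1 + k2 + k3 = n \<longrightarrow> x \<in> B \<longrightarrow> x \<noteq> k1 * s + k2 * (s + 1) + k3 * (s + 2)"
proof (induction n)
  case 0
  show ?case
  proof (intro allI impI)
    fix x k1 k2 k3 assume "k1 + k2 + k3 = (0::nat)" "x \<in> B"
    moreover have "x \<noteq> 0" by (metis \<open>x \<in> B\<close> z)
    ultimately show "x \<noteq> k1 * s + k2 * (s + 1) + k3 * (s + 2)" by simp
  qed
next
  case (Suc n)
  show ?case
  proof (intro allI impI notI)
    fix x k1 k2 k3 assume k: "k1 + k2 + k3 = Suc n" and x: "x \<in> B" and e: "x = k1 * s + k2 * (s + 1) + k3 * (s + 2)"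
    have "k1 > 0 \<or> k2 > 0 \<or> k3 > 0" using k by linarith
    then consider "k1 > 0" | "k2 > 0" | "k3 > 0" by blast
    then show False
    proof cases
      case 1
      then obtain a where a: "k1 = Suc a" by (cases k1) auto
      have "x - s = a * s + k2 * (s + 1) + k3 * (s + 2)" "s \<le> x" using e a by auto
      moreover have "x - s \<in> B" using cl x \<open>s \<le> x\<close> unfolding cl3_def by auto
      ultimately show False using Suc.IH k a by auto
    next
      case 2
      then obtain a where a: "k2 = Suc a" by (cases k2) auto
      have "x - (s+1) = k1 * s + a * (s + 1) + k3 * (s + 2)" "s + 1 \<le> x" using e a by auto
      moreover have "x - (s+1) \<in> B" using cl x \<open>s+1 \<le> x\<close> unfolding cl3_def by auto
      ultimately show False using Suc.IH k a by auto
    next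
      case 3
      then obtain a where a: "k3 = Suc a" by (cases k3) auto
      have "x - (s+2) = k1 * s + k2 * (s + 1) + a * (s + 2)" "s + 2 \<le> x" using e a by auto
      moreover have "x - (s+2) \<in> B" using cl x \<open>s+2 \<le> x\<close> unfolding cl3_def by auto
      ultimately show False using Suc.IH k a by auto
    qed
  qed
qed

lemma oi_iff:
  assumes s: "s \<ge> 1" and z: "0 \<notin> B"
  shows "B \<in> order_ideals s \<longleftrightarrow> finite B \<and> cl3 s B"
proof
  assume B: "B \<in> order_ideals s"
  have BT: "B \<subseteq> T s" using B unfolding oi_step by auto
  have "finite B" using BT T_eq[OF s] finite_P by (metis finite_imageI finite_subset)
  moreover have "cl3 s B" unfolding cl3_def
  proof (intro ballI impI)
    fix x t assume x: "x \<in> B" and t: "t \<in> {s, s+1, s+2}" and tx: "t \<le> x"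
    have xT: "x \<in> T s" using x BT by auto
    have "\<exists>a b c. t = a * s + b * (s+1) + c * (s+2) \<and> a + b + c = (1::nat)"
    proof -
      consider "t = s" | "t = s+1" | "t = s+2" using t by auto
      then show ?thesis
      proof cases
        case 1 then have "t = 1 * s + 0 * (s+1) + 0 * (s+2) \<and> 1 + 0 + 0 = (1::nat)" by simp
        then show ?thesis by blast
      next
        case 2 then have "t = 0 * s + 1 * (s+1) + 0 * (s+2) \<and> 0 + 1 + 0 = (1::nat)" by simp
        then show ?thesis by blast
      next
        case 3 then have "t = 0 * s + 0 * (s+1) + 1 * (s+2) \<and> 0 + 0 + 1 = (1::nat)" by simp
        then show ?thesis by blast
      qed
    qed
    then obtain a b c where abc: "t = a * s + b * (s+1) + c * (s+2)" "a + b + c = 1" by blast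
    have "x \<noteq> t" using xT abc unfolding T_def by blast
    have "x - t \<in> T s"
    proof -
      have "0 < x - t" using tx \<open>x \<noteq> t\<close> by simp
      moreover have "\<not> (\<exists>k1 k2 k3. x - t = k1 * s + k2 * (s + 1) + k3 * (s + 2))"
      proof
        assume "\<exists>k1 k2 k3. x - t = k1 * s + k2 * (s + 1) + k3 * (s + 2)"
        then obtain k1 k2 k3 where "x - t = k1 * s + k2 * (s + 1) + k3 * (s + 2)" by blast
        then have "x = (k1 + a) * s + (k2 + b) * (s + 1) + (k3 + c) * (s + 2)"
          using abc tx by (simp add: algebra_simps)
        then show False using xT unfolding T_def by blast
      qed
      ultimately show ?thesis unfolding T_def by blast
    qed
    then have "T_step s x (x - t)" unfolding T_step_def using xT t tx \<open>x \<noteq> t\<close> s by auto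
    then show "x - t \<in> B" using B x unfolding oi_step by blast
  qed
  ultimately show "finite B \<and> cl3 s B" by simp
next
  assume "finite B \<and> cl3 s B"
  then have cl: "cl3 s B" by simp
  have "B \<subseteq> T s"
  proof
    fix x assume x: "x \<in> B"
    then have "0 < x" using z by (cases x) auto
    moreover have "\<not> (\<exists>k1 k2 k3. x = k1 * s + k2 * (s + 1) + k3 * (s + 2))"
      using no_repr[OF cl z] x by blast
    ultimately show "x \<in> T s" unfolding T_def by blast
  qed
  moreover have "\<forall>y\<in>B. \<forall>x. T_step s y x \<longrightarrow> x \<in> B"
  proof (intro ballI allI impI)
    fix y x assume y: "y \<in> B" and st: "T_step s y x"
    then have "y - x \<in> {s, s+1, s+2}" "x < y" unfolding T_step_def by auto
    moreover have "y - x \<le> y" by simp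
    ultimately have "y - (y - x) \<in> B" using cl y unfolding cl3_def by blast
    then show "x \<in> B" using \<open>x < y\<close> by simp
  qed
  ultimately show "B \<in> order_ideals s" unfolding oi_step by blast
qed

lemma finite_beta: "finite (beta lam)" unfolding beta_def by simp

lemma partA: assumes s: "s \<ge> 1" shows "card (cores3 s) = card (order_ideals s)"
proof -
  have "bij_betw beta (cores3 s) (order_ideals s)"
    unfolding bij_betw_def
  proof
    show "inj_on beta (cores3 s)"
      by (rule inj_onI) (auto simp: cores3_def intro: beta_inj)
    show "beta ` cores3 s = order_ideals s"
    proof
      show "beta ` cores3 s \<subseteq> order_ideals s"
      proof
        fix B assume "B \<in> beta ` cores3 s"
        then obtain lam where l: "lam \<in> cores3 s" "B = beta lam" by auto
        then have p: "is_partition lam" unfolding cores3_def by auto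
        have "0 \<notin> B" using beta_pos[OF p] l by blast
        then show "B \<in> order_ideals s" using oi_iff[OF s] cores_iff[OF p s] l finite_beta by auto
      qed
      show "order_ideals s \<subseteq> beta ` cores3 s"
      proof
        fix B assume B: "B \<in> order_ideals s"
        have z: "0 \<notin> B" using B unfolding oi_step T_def by auto
        then have fc: "finite B" "cl3 s B" using oi_iff[OF s z] B by auto
        obtain lam where l: "is_partition lam" "beta lam = B" using beta_surj[OF fc(1) z] by blast
        then have "lam \<in> cores3 s" using cores_iff[OF l(1) s] fc by simp
        then show "B \<in> beta ` cores3 s" using l by auto
      qed
    qed
  qed
  then show ?thesis by (rule bij_betw_same_card)
qed



lemma r_ID: "r s = card (ID s)"
proof (cases "s = 0")
  case True then show ?thesis by (simp add: r_def ID01)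
next
  case False
  then have "s \<ge> 1" by simp
  then show ?thesis using partA card_oi False by (simp add: r_def)
qed

lemma ID_mot: "card (ID s) = mot s"
proof (induction s rule: less_induct)
  case (less s)
  show ?case
  proof (cases s)
    case 0 then show ?thesis by (simp add: ID01 mot_def catalan_def)
  next
    case (Suc s')
    show ?thesis
    proof (cases s')
      case 0 then show ?thesis using Suc by (simp add: ID01 mot_def catalan_def)
    next
      case (Suc n)
      have "card (ID s) = card (ID (Suc n)) + (\<Sum>a\<le>n. card (ID a) * card (ID (n - a)))"
        using ID_rec[of n] \<open>s = Suc s'\<close> Suc by simp
      also have "\<dots> = mot (Suc n) + (\<Sum>a\<le>n. mot a * mot (n - a))"
        using less.IH \<open>s = Suc s'\<close> Suc by (auto intro!: sum.cong)
      also have "\<dots> = mot s" using mot_rec[of n] \<open>s = Suc s'\<close> Suc by simp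
      finally show ?thesis .
    qed
  qed
qed

theorem mainTheorem3:
  shows "(\<forall>s\<ge>1. card (cores3 s) = card (order_ideals s))
    \<and> (\<forall>s\<ge>2. r s = r (s - 1) + (\<Sum>i = 2..s. r (i - 2) * r (s - i)))
    \<and> (\<forall>s\<ge>1. r s = (\<Sum>k\<le>s. (s choose (2 * k)) * catalan k))"
proof (intro conjI allI impI)
  fix s :: nat assume "s \<ge> 1"
  then show "card (cores3 s) = card (order_ideals s)" by (rule partA)
next
  fix s :: nat assume s2: "s \<ge> 2"
  then obtain n where n: "s = Suc (Suc n)" by (metis add_2_eq_Suc le_Suc_ex)
  have "(\<Sum>i = 2..s. r (i - 2) * r (s - i)) = (\<Sum>a = 0..n. r a * r (n - a))"
  proof -
    have e: "{2..s} = {0+2..n+2}" using n by auto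
    have "(\<Sum>i = 2..s. r (i - 2) * r (s - i)) = (\<Sum>i = 0+2..n+2. r (i - 2) * r (s - i))"
      by (simp only: e)
    also have "\<dots> = (\<Sum>a = 0..n. r (a + 2 - 2) * r (s - (a + 2)))"
      by (rule sum.shift_bounds_cl_nat_ivl)
    also have "\<dots> = (\<Sum>a = 0..n. r a * r (n - a))" using n by simp
    finally show ?thesis .
  qed
  also have "\<dots> = (\<Sum>a\<le>n. card (ID a) * card (ID (n - a)))" by (simp add: r_ID atLeast0AtMost)
  finally show "r s = r (s - 1) + (\<Sum>i = 2..s. r (i - 2) * r (s - i))"
    using ID_rec[of n] n by (simp add: r_ID)
next
  fix s :: nat assume "s \<ge> 1"
  show "r s = (\<Sum>k\<le>s. (s choose (2 * k)) * catalan k)"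
    using r_ID ID_mot by (simp add: mot_def)
qed

end
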